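(* In the non-symmetric 2-colored operad $\mathbb V^{(d)}$ described below, the rewriting system $$m_{ss}(m_{ss}(x_1,x_2),x_3)\to m_{ss}(x_1,m_{ss}(x_2,x_3)),\quad m_{ts}(m_{ts}(x_1,x_2),x_3)\to m_{ts}(x_1,m_{ss}(x_2,x_3)),$$ $$m_{ts}(m_{st}(x_1,x_2),x_3)\to m_{st}(x_1,m_{ts}(x_2,x_3)),\quad m_{st}(m_{ss}(x_1,x_2),x_3)\to m_{st}(x_1,m_{st}(x_2,x_3)),$$ $$u(m_{ts}(x_1,x_2))\to m_{ss}(u(x_1),x_2),\quad u(m_{st}(x_1,x_2))\to m_{ss}(x_1,u(x_2))$$ is convergent (terminating and confluent).
   Context: Colors: straight $s$ and dotted $t$. $\mathbb V^{(d)}$ is the non-symmetric 2-colored operad generated by three binary operations of degree $0$: $m_{ss}$ (inputs $s,s$; output $s$), $m_{ts}$ (inputs $t,s$; output $t$), $m_{st}$ (inputs $s,t$; output $t$), and a unary operation $u$ of degree $d$ (input $t$; output $s$), subject to the six relations obtained by replacing each arrow above by an equality. A rewriting system for a non-symmetric operad consists of rules $\tau\to f$ ($\tau$ a planar tree monomial), reducing monomials by replacing a divisor $\tau$ with $f$; it is terminating if there is no infinite chain of reductions and confluent if every ambiguity (two leading monomials overlapping in a common vertex) yields an S-polynomial that reduces to zero. *)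

theory Defs
  imports Main
begin

datatype colour = S | T

text \<open>Planar tree monomials of the free non-symmetric 2-coloured operad generated by
  m_ss, m_ts, m_st (binary) and u (unary, of degree d).  Leaves are the inputs,
  labelled by their colour; in the non-symmetric setting the leaves are numbered
  left to right, so the label is implicit in the planar position.
  (The degree d of u only affects signs/grading and plays no role in rewriting.)\<close>
datatype tm = Leaf colour | Mss tm tm | Mts tm tm | Mst tm tm | U tm

fun outcol :: "tm \<Rightarrow> colour option" where
  "outcol (Leaf c) = Some c"
| "outcol (Mss a b) = (if outcol a = Some S \<and> outcol b = Some S then Some S else None)"
| "outcol (Mts a b) = (if outcol a = Some T \<and> outcol b = Some S then Some T else None)"
| "outcol (Mst a b) = (if outcol a = Some S \<and> outcol b = Some T then Some T else None)"
| "outcol (U a) = (if outcol a = Some T then Some S else None)"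

definition wellcol :: "tm \<Rightarrow> bool" where
  "wellcol x \<longleftrightarrow> outcol x \<noteq> None"

inductive rule :: "tm \<Rightarrow> tm \<Rightarrow> bool" where
  r1: "rule (Mss (Mss x1 x2) x3) (Mss x1 (Mss x2 x3))"
| r2: "rule (Mts (Mts x1 x2) x3) (Mts x1 (Mss x2 x3))"
| r3: "rule (Mts (Mst x1 x2) x3) (Mst x1 (Mts x2 x3))"
| r4: "rule (Mst (Mss x1 x2) x3) (Mst x1 (Mst x2 x3))"
| r5: "rule (U (Mts x1 x2)) (Mss (U x1) x2)"
| r6: "rule (U (Mst x1 x2)) (Mss x1 (U x2))"

inductive rstep :: "tm \<Rightarrow> tm \<Rightarrow> bool" where
  base: "rule a b \<Longrightarrow> rstep a b"
| mss1: "rstep a a' \<Longrightarrow> rstep (Mss a b) (Mss a' b)"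
| mss2: "rstep b b' \<Longrightarrow> rstep (Mss a b) (Mss a b')"
| mts1: "rstep a a' \<Longrightarrow> rstep (Mts a b) (Mts a' b)"
| mts2: "rstep b b' \<Longrightarrow> rstep (Mts a b) (Mts a b')"
| mst1: "rstep a a' \<Longrightarrow> rstep (Mst a b) (Mst a' b)"
| mst2: "rstep b b' \<Longrightarrow> rstep (Mst a b) (Mst a b')"
| u1: "rstep a a' \<Longrightarrow> rstep (U a) (U a')"

definition Red :: "(tm \<times> tm) set" where
  "Red = {(x, y). wellcol x \<and> rstep x y}"

definition terminating :: "(tm \<times> tm) set \<Rightarrow> bool" where
  "terminating R \<longleftrightarrow> wf (R\<inverse>)"

definition confluent :: "(tm \<times> tm) set \<Rightarrow> bool" where
  "confluent R \<longleftrightarrow> (\<forall>a b c. (a, b) \<in> R\<^sup>* \<and> (a, c) \<in> R\<^sup>* \<longrightarrow>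
      (\<exists>d. (b, d) \<in> R\<^sup>* \<and> (c, d) \<in> R\<^sup>*))"

end

theory Submission
  imports Defs
begin

fun w :: "tm \<Rightarrow> nat" where
  "w (Leaf c) = 0"
| "w (Mss a b) = 2 * w a + w b + 1"
| "w (Mts a b) = 2 * w a + w b + 1"
| "w (Mst a b) = 2 * w a + w b + 1"
| "w (U a) = 3 * w a"

lemma rule_w: "rule a b \<Longrightarrow> w b < w a"
  by (induction rule: rule.induct) auto

lemma rstep_w: "rstep a b \<Longrightarrow> w b < w a"
  by (induction rule: rstep.induct) (auto simp: rule_w)

lemma rule_col: "rule a b \<Longrightarrow> outcol b = outcol a"
  by (induction rule: rule.induct) auto

lemma rstep_col: "rstep a b \<Longrightarrow> outcol b = outcol a"
  by (induction rule: rstep.induct) (auto simp: rule_col)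

lemma rsteps_col: "rstep\<^sup>*\<^sup>* a b \<Longrightarrow> outcol b = outcol a"
  by (induction rule: rtranclp_induct) (auto simp: rstep_col)

lemma c_mss1: "rstep\<^sup>*\<^sup>* a a' \<Longrightarrow> rstep\<^sup>*\<^sup>* (Mss a b) (Mss a' b)"
  by (induction rule: rtranclp_induct) (auto intro: rtranclp.rtrancl_into_rtrancl rstep.intros)
lemma c_mss2: "rstep\<^sup>*\<^sup>* a a' \<Longrightarrow> rstep\<^sup>*\<^sup>* (Mss b a) (Mss b a')"
  by (induction rule: rtranclp_induct) (auto intro: rtranclp.rtrancl_into_rtrancl rstep.intros)
lemma c_mts1: "rstep\<^sup>*\<^sup>* a a' \<Longrightarrow> rstep\<^sup>*\<^sup>* (Mts a b) (Mts a' b)"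
  by (induction rule: rtranclp_induct) (auto intro: rtranclp.rtrancl_into_rtrancl rstep.intros)
lemma c_mts2: "rstep\<^sup>*\<^sup>* a a' \<Longrightarrow> rstep\<^sup>*\<^sup>* (Mts b a) (Mts b a')"
  by (induction rule: rtranclp_induct) (auto intro: rtranclp.rtrancl_into_rtrancl rstep.intros)
lemma c_mst1: "rstep\<^sup>*\<^sup>* a a' \<Longrightarrow> rstep\<^sup>*\<^sup>* (Mst a b) (Mst a' b)"
  by (induction rule: rtranclp_induct) (auto intro: rtranclp.rtrancl_into_rtrancl rstep.intros)
lemma c_mst2: "rstep\<^sup>*\<^sup>* a a' \<Longrightarrow> rstep\<^sup>*\<^sup>* (Mst b a) (Mst b a')"
  by (induction rule: rtranclp_induct) (auto intro: rtranclp.rtrancl_into_rtrancl rstep.intros)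
lemma c_u: "rstep\<^sup>*\<^sup>* a a' \<Longrightarrow> rstep\<^sup>*\<^sup>* (U a) (U a')"
  by (induction rule: rtranclp_induct) (auto intro: rtranclp.rtrancl_into_rtrancl rstep.intros)

lemma st: "rule a b \<Longrightarrow> rstep\<^sup>*\<^sup>* a b"
  by (simp add: rstep.base r_into_rtranclp)

lemmas cs = c_mss1 c_mss2 c_mts1 c_mts2 c_mst1 c_mst2 c_u
lemmas rr = rule.intros[THEN st]

lemma T: "rstep\<^sup>*\<^sup>* a b \<Longrightarrow> rstep\<^sup>*\<^sup>* b c \<Longrightarrow> rstep\<^sup>*\<^sup>* a c" by simp

lemma two: "rstep a b \<Longrightarrow> rstep b c \<Longrightarrow> rstep\<^sup>*\<^sup>* a c"
  by (meson converse_rtranclp_into_rtranclp r_into_rtranclp)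
lemma one: "rstep a b \<Longrightarrow> rstep\<^sup>*\<^sup>* a b" by simp
lemma cp0: "\<exists>d. rstep\<^sup>*\<^sup>* (Mss (Mss y1 y2) (Mss x2 x3)) d \<and> rstep\<^sup>*\<^sup>* (Mss (Mss y1 (Mss y2 x2)) x3) d"
  apply (rule exI[of _ "Mss y1 (Mss y2 (Mss x2 x3))"])
  apply (rule conjI)
  apply (rule one, meson rstep.intros rule.intros)
  apply (rule two[of _ "Mss y1 (Mss (Mss y2 x2) x3)"]; meson rstep.intros rule.intros)
  done
lemma cp1: "\<exists>d. rstep\<^sup>*\<^sup>* (Mts (Mts y1 y2) (Mss x2 x3)) d \<and> rstep\<^sup>*\<^sup>* (Mts (Mts y1 (Mss y2 x2)) x3) d"
  apply (rule exI[of _ "Mts y1 (Mss y2 (Mss x2 x3))"])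
  apply (rule conjI)
  apply (rule one, meson rstep.intros rule.intros)
  apply (rule two[of _ "Mts y1 (Mss (Mss y2 x2) x3)"]; meson rstep.intros rule.intros)
  done
lemma cp2: "\<exists>d. rstep\<^sup>*\<^sup>* (Mts (Mst y1 y2) (Mss x2 x3)) d \<and> rstep\<^sup>*\<^sup>* (Mts (Mst y1 (Mts y2 x2)) x3) d"
  apply (rule exI[of _ "Mst y1 (Mts y2 (Mss x2 x3))"])
  apply (rule conjI)
  apply (rule one, meson rstep.intros rule.intros)
  apply (rule two[of _ "Mst y1 (Mts (Mts y2 x2) x3)"]; meson rstep.intros rule.intros)
  done
lemma cp3: "\<exists>d. rstep\<^sup>*\<^sup>* (Mst (Mss y1 y2) (Mts x2 x3)) d \<and> rstep\<^sup>*\<^sup>* (Mts (Mst y1 (Mst y2 x2)) x3) d"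
  apply (rule exI[of _ "Mst y1 (Mst y2 (Mts x2 x3))"])
  apply (rule conjI)
  apply (rule one, meson rstep.intros rule.intros)
  apply (rule two[of _ "Mst y1 (Mts (Mst y2 x2) x3)"]; meson rstep.intros rule.intros)
  done
lemma cp4: "\<exists>d. rstep\<^sup>*\<^sup>* (Mst (Mss y1 y2) (Mst x2 x3)) d \<and> rstep\<^sup>*\<^sup>* (Mst (Mss y1 (Mss y2 x2)) x3) d"
  apply (rule exI[of _ "Mst y1 (Mst y2 (Mst x2 x3))"])
  apply (rule conjI)
  apply (rule one, meson rstep.intros rule.intros)
  apply (rule two[of _ "Mst y1 (Mst (Mss y2 x2) x3)"]; meson rstep.intros rule.intros)
  done
lemma cp5: "\<exists>d. rstep\<^sup>*\<^sup>* (Mss (U (Mts y1 y2)) x2) d \<and> rstep\<^sup>*\<^sup>* (U (Mts y1 (Mss y2 x2))) d"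
  apply (rule exI[of _ "Mss (U y1) (Mss y2 x2)"])
  apply (rule conjI)
  apply (rule two[of _ "Mss (Mss (U y1) y2) x2"]; meson rstep.intros rule.intros)
  apply (rule one, meson rstep.intros rule.intros)
  done
lemma cp6: "\<exists>d. rstep\<^sup>*\<^sup>* (Mss (U (Mst y1 y2)) x2) d \<and> rstep\<^sup>*\<^sup>* (U (Mst y1 (Mts y2 x2))) d"
  apply (rule exI[of _ "Mss y1 (Mss (U y2) x2)"])
  apply (rule conjI)
  apply (rule two[of _ "Mss (Mss y1 (U y2)) x2"]; meson rstep.intros rule.intros)
  apply (rule two[of _ "Mss y1 (U (Mts y2 x2))"]; meson rstep.intros rule.intros)
  done
lemma cp7: "\<exists>d. rstep\<^sup>*\<^sup>* (Mss (Mss y1 y2) (U x2)) d \<and> rstep\<^sup>*\<^sup>* (U (Mst y1 (Mst y2 x2))) d"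
  apply (rule exI[of _ "Mss y1 (Mss y2 (U x2))"])
  apply (rule conjI)
  apply (rule one, meson rstep.intros rule.intros)
  apply (rule two[of _ "Mss y1 (U (Mst y2 x2))"]; meson rstep.intros rule.intros)
  done
lemmas cps = cp0 cp1 cp2 cp3 cp4 cp5 cp6 cp7

inductive_cases iMss: "rstep (Mss a b) c"
inductive_cases iMts: "rstep (Mts a b) c"
inductive_cases iMst: "rstep (Mst a b) c"
inductive_cases iU: "rstep (U a) c"
inductive_cases jMss: "rule (Mss a b) c"
inductive_cases jMts: "rule (Mts a b) c"
inductive_cases jMst: "rule (Mst a b) c"
inductive_cases jU: "rule (U a) c"
inductive_cases jL: "rule (Leaf a) c"

lemma join_rule: "rule a b \<Longrightarrow> rstep a c \<Longrightarrow> \<exists>d. rstep\<^sup>*\<^sup>* b d \<and> rstep\<^sup>*\<^sup>* c d"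
  apply (induction rule: rule.induct)
  apply ((auto elim!: iMss iMts iMst iU jMss jMts jMst jU jL) ; ((blast intro: cps one rstep.intros rule.intros)?))
  apply ((auto elim!: iMss iMts iMst iU jMss jMts jMst jU jL) ; ((blast intro: cps one rstep.intros rule.intros)?))
  apply ((auto elim!: iMss iMts iMst iU jMss jMts jMst jU jL) ; ((blast intro: cps one rstep.intros rule.intros)?))
  apply ((auto elim!: iMss iMts iMst iU jMss jMts jMst jU jL) ; ((blast intro: cps one rstep.intros rule.intros)?))
  apply ((auto elim!: iMss iMts iMst iU jMss jMts jMst jU jL) ; ((blast intro: cps one rstep.intros rule.intros)?))
  apply ((auto elim!: iMss iMts iMst iU jMss jMts jMst jU jL) ; ((blast intro: cps one rstep.intros rule.intros)?))
  done

definition joinable where "joinable b c \<longleftrightarrow> (\<exists>d. rstep\<^sup>*\<^sup>* b d \<and> rstep\<^sup>*\<^sup>* c d)"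

lemma local_conf: "rstep a b \<Longrightarrow> rstep a c \<Longrightarrow> \<exists>d. rstep\<^sup>*\<^sup>* b d \<and> rstep\<^sup>*\<^sup>* c d"
proof (induction arbitrary: c rule: rstep.induct)
  case (base a b)
  then show ?case using join_rule by blast
next
  case (mss1 a a' b)
  from mss1.prems show ?case
  proof cases
    case base then show ?thesis using join_rule[of _ c "Mss a' b"] mss1 by (blast intro: rstep.intros)
  next
    case (mss1 x) then show ?thesis using mss1.IH by (blast intro: cs)
  next
    case (mss2 x) then show ?thesis using \<open>rstep a a'\<close>
      by (meson rstep.intros r_into_rtranclp)
  qed
next
  case (mss2 b b' a)
  from mss2.prems show ?case
  proof cases
    case base then show ?thesis using join_rule[of _ c "Mss a b'"] mss2 by (blast intro: rstep.intros)
  next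
    case (mss2 x) then show ?thesis using mss2.IH by (blast intro: cs)
  next
    case (mss1 x) then show ?thesis using \<open>rstep b b'\<close>
      by (meson rstep.intros r_into_rtranclp)
  qed
next
  case (mts1 a a' b)
  from mts1.prems show ?case
  proof cases
    case base then show ?thesis using join_rule[of _ c "Mts a' b"] mts1 by (blast intro: rstep.intros)
  next
    case (mts1 x) then show ?thesis using mts1.IH by (blast intro: cs)
  next
    case (mts2 x) then show ?thesis using \<open>rstep a a'\<close>
      by (meson rstep.intros r_into_rtranclp)
  qed
next
  case (mts2 b b' a)
  from mts2.prems show ?case
  proof cases
    case base then show ?thesis using join_rule[of _ c "Mts a b'"] mts2 by (blast intro: rstep.intros)
  next
    case (mts2 x) then show ?thesis using mts2.IH by (blast intro: cs)
  next
    case (mts1 x) then show ?thesis using \<open>rstep b b'\<close>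
      by (meson rstep.intros r_into_rtranclp)
  qed
next
  case (mst1 a a' b)
  from mst1.prems show ?case
  proof cases
    case base then show ?thesis using join_rule[of _ c "Mst a' b"] mst1 by (blast intro: rstep.intros)
  next
    case (mst1 x) then show ?thesis using mst1.IH by (blast intro: cs)
  next
    case (mst2 x) then show ?thesis using \<open>rstep a a'\<close>
      by (meson rstep.intros r_into_rtranclp)
  qed
next
  case (mst2 b b' a)
  from mst2.prems show ?case
  proof cases
    case base then show ?thesis using join_rule[of _ c "Mst a b'"] mst2 by (blast intro: rstep.intros)
  next
    case (mst2 x) then show ?thesis using mst2.IH by (blast intro: cs)
  next
    case (mst1 x) then show ?thesis using \<open>rstep b b'\<close>
      by (meson rstep.intros r_into_rtranclp)
  qed
next
  case (u1 a a')
  from u1.prems show ?case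
  proof cases
    case base then show ?thesis using join_rule[of _ c "U a'"] u1 by (blast intro: rstep.intros)
  next
    case (u1 x) then show ?thesis using u1.IH by (blast intro: cs)
  qed
qed

lemma newman: "rstep\<^sup>*\<^sup>* a b \<Longrightarrow> rstep\<^sup>*\<^sup>* a c \<Longrightarrow> \<exists>d. rstep\<^sup>*\<^sup>* b d \<and> rstep\<^sup>*\<^sup>* c d"
proof (induction "w a" arbitrary: a b c rule: less_induct)
  case less
  show ?case
  proof (cases "a = b \<or> a = c")
    case True then show ?thesis using less.prems by blast
  next
    case False
    then obtain b1 c1 where ab1: "rstep a b1" "rstep\<^sup>*\<^sup>* b1 b" and ac1: "rstep a c1" "rstep\<^sup>*\<^sup>* c1 c"
      using less.prems by (metis converse_rtranclpE)
    obtain d0 where d0: "rstep\<^sup>*\<^sup>* b1 d0" "rstep\<^sup>*\<^sup>* c1 d0" using local_conf ab1(1) ac1(1) by blast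
    obtain e where e: "rstep\<^sup>*\<^sup>* b e" "rstep\<^sup>*\<^sup>* d0 e"
      using less.hyps[OF rstep_w[OF ab1(1)] ab1(2) d0(1)] by blast
    have "rstep\<^sup>*\<^sup>* c1 e" using d0(2) e(2) by simp
    then obtain f where f: "rstep\<^sup>*\<^sup>* c f" "rstep\<^sup>*\<^sup>* e f"
      using less.hyps[OF rstep_w[OF ac1(1)] ac1(2)] by blast
    show ?thesis using e f by (meson rtranclp_trans)
  qed
qed

lemma Red_rsteps: "(a, b) \<in> Red\<^sup>* \<Longrightarrow> rstep\<^sup>*\<^sup>* a b"
  by (induction rule: rtrancl_induct) (auto simp: Red_def)

lemma rsteps_Red: "rstep\<^sup>*\<^sup>* a b \<Longrightarrow> wellcol a \<Longrightarrow> (a, b) \<in> Red\<^sup>*"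
proof (induction rule: rtranclp_induct)
  case base then show ?case by simp
next
  case (step y z)
  have "wellcol y" using rsteps_col[OF step.hyps(1)] step.prems by (simp add: wellcol_def)
  then have "(y, z) \<in> Red" using step.hyps(2) by (simp add: Red_def)
  then show ?case using step by (meson rtrancl.rtrancl_into_rtrancl)
qed

lemma Red_nonwc: "(a, b) \<in> Red\<^sup>* \<Longrightarrow> \<not> wellcol a \<Longrightarrow> b = a"
  by (induction rule: converse_rtrancl_induct) (auto simp: Red_def)

theorem theorem4p11:
  shows "terminating Red \<and> confluent Red"
proof
  have "Red\<inverse> \<subseteq> inv_image less_than w" by (auto simp: Red_def rstep_w)
  then show "terminating Red" unfolding terminating_def
    using wf_subset wf_inv_image wf_less_than by blast
next
  show "confluent Red" unfolding confluent_def
  proof (intro allI impI)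
    fix a b c assume h: "(a, b) \<in> Red\<^sup>* \<and> (a, c) \<in> Red\<^sup>*"
    show "\<exists>d. (b, d) \<in> Red\<^sup>* \<and> (c, d) \<in> Red\<^sup>*"
    proof (cases "wellcol a")
      case False then show ?thesis using h Red_nonwc by blast
    next
      case True
      obtain d where d: "rstep\<^sup>*\<^sup>* b d" "rstep\<^sup>*\<^sup>* c d" using newman h Red_rsteps by blast
      have "wellcol b" "wellcol c" using True h Red_rsteps rsteps_col unfolding wellcol_def by metis+
      then show ?thesis using d rsteps_Red by blast
    qed
  qed
qed

end
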